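(* For every $n\geq 0$, the partially ordered set $\mathcal{L}_n^*$ is a distributive lattice.
   Context: Games are finite partizan games; $o(G)$ is the misère outcome class (ordered $\mathscr{L}>\mathscr{N}>\mathscr{R}$, $\mathscr{L}>\mathscr{P}>\mathscr{R}$). A universe is a set of games closed under options, disjunctive sums, conjugates, and forming $\{\mathscr{G}^L\mid\mathscr{G}^R\}$ from nonempty finite subsets of it; $G\geq_\mathcal{U}H$ means $o(G+X)\geq o(H+X)$ for all $X\in\mathcal{U}$. A Left dead-end is a game all of whose subpositions have no Left option. For Left dead-ends, $G\geq H$ means $G\geq_\mathcal{U}H$ for every universe $\mathcal{U}$, and $G=H$ means $G\geq H$ and $H\geq G$. The birthday of a Left dead-end $G$ is the minimum height of the game tree of a Left dead-end $H$ with $H=G$. $\mathcal{L}_n$ is the set of $=$-equivalence classes of Left dead-ends of birthday $\leq n$, partially ordered by $\geq$; $\mathcal{L}_n^\times=\mathcal{L}_n\setminus\{0\}$; $\mathcal{L}_n^*=\mathcal{L}_n^\times\cup\{\triangledown\}$ where $\triangledown$ is a new element with $\triangledown\geq G$ for all $G\in\mathcal{L}_n^\times$. *)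

theory Defs
  imports Main "HOL-Library.FSet"
begin

datatype game = Game (lopts: "game fset") (ropts: "game fset")

definition zero_game :: game where
  "zero_game = Game {||} {||}"

primrec height :: "game \<Rightarrow> nat" where
  "height (Game L R) =
     (if L = {||} \<and> R = {||} then 0
      else Suc (Max (fset (fimage height L |\<union>| fimage height R))))"

lemma size_lopt: "x |\<in>| L \<Longrightarrow> size x < size (Game L R)"
  by (induct L) (auto simp: sum.insert_if)

lemma size_ropt: "x |\<in>| R \<Longrightarrow> size x < size (Game L R)"
  by (induct R) (auto simp: sum.insert_if)

function gsum :: "game \<Rightarrow> game \<Rightarrow> game" where
  "gsum (Game L1 R1) (Game L2 R2) =
     Game ((\<lambda>x. gsum x (Game L2 R2)) |`| L1 |\<union>| (\<lambda>y. gsum (Game L1 R1) y) |`| L2)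
          ((\<lambda>x. gsum x (Game L2 R2)) |`| R1 |\<union>| (\<lambda>y. gsum (Game L1 R1) y) |`| R2)"
  by pat_completeness auto
termination
  by (relation "measure (\<lambda>(g, h). size g + size h)")
     (auto dest: size_lopt size_ropt)

primrec conj :: "game \<Rightarrow> game" where
  "conj (Game L R) = Game (fimage conj R) (fimage conj L)"

text \<open>\<open>wins G p\<close>: the player \<open>p\<close> (\<open>True\<close> = Left, \<open>False\<close> = Right), moving first in \<open>G\<close>,
  wins under the misere convention (a player with no move available wins).\<close>
primrec wins :: "game \<Rightarrow> bool \<Rightarrow> bool" where
  "wins (Game L R) =
     (\<lambda>p. if p then L = {||} \<or> (\<exists>f\<in>fset (fimage wins L). \<not> f False)
          else R = {||} \<or> (\<exists>f\<in>fset (fimage wins R). \<not> f True))"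

datatype outcome = OutL | OutN | OutP | OutR

definition outcome :: "game \<Rightarrow> outcome" where
  "outcome G =
     (if wins G True then (if wins G False then OutN else OutL)
      else (if wins G False then OutR else OutP))"

definition outcome_ge :: "outcome \<Rightarrow> outcome \<Rightarrow> bool" where
  "outcome_ge a b \<longleftrightarrow> a = b \<or> a = OutL \<or> b = OutR"

inductive_set subpositions :: "game \<Rightarrow> game set" for G :: game where
  self: "G \<in> subpositions G"
| lopt: "H \<in> subpositions G \<Longrightarrow> x |\<in>| lopts H \<Longrightarrow> x \<in> subpositions G"
| ropt: "H \<in> subpositions G \<Longrightarrow> x |\<in>| ropts H \<Longrightarrow> x \<in> subpositions G"

definition universe :: "game set \<Rightarrow> bool" where
  "universe U \<longleftrightarrow>
     (\<forall>G\<in>U. \<forall>x. (x |\<in>| lopts G \<or> x |\<in>| ropts G) \<longrightarrow> x \<in> U) \<and>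
     (\<forall>G\<in>U. \<forall>H\<in>U. gsum G H \<in> U) \<and>
     (\<forall>G\<in>U. conj G \<in> U) \<and>
     (\<forall>A B. A \<noteq> {||} \<longrightarrow> B \<noteq> {||} \<longrightarrow> fset A \<subseteq> U \<longrightarrow> fset B \<subseteq> U \<longrightarrow> Game A B \<in> U)"

definition ge_in :: "game set \<Rightarrow> game \<Rightarrow> game \<Rightarrow> bool" where
  "ge_in U G H \<longleftrightarrow> (\<forall>X\<in>U. outcome_ge (outcome (gsum G X)) (outcome (gsum H X)))"

definition left_dead_end :: "game \<Rightarrow> bool" where
  "left_dead_end G \<longleftrightarrow> (\<forall>H\<in>subpositions G. lopts H = {||})"

definition dge :: "game \<Rightarrow> game \<Rightarrow> bool" where
  "dge G H \<longleftrightarrow> (\<forall>U. universe U \<longrightarrow> ge_in U G H)"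

definition deq :: "game \<Rightarrow> game \<Rightarrow> bool" where
  "deq G H \<longleftrightarrow> dge G H \<and> dge H G"

definition birthday :: "game \<Rightarrow> nat" where
  "birthday G = (LEAST h. \<exists>H. left_dead_end H \<and> deq H G \<and> height H = h)"

definition dclass :: "game \<Rightarrow> game set" where
  "dclass G = {H. left_dead_end H \<and> deq H G}"

definition Ln :: "nat \<Rightarrow> game set set" where
  "Ln n = {dclass G | G. left_dead_end G \<and> birthday G \<le> n}"

definition class_le :: "game set \<Rightarrow> game set \<Rightarrow> bool" where
  "class_le A B \<longleftrightarrow> (\<exists>G\<in>A. \<exists>H\<in>B. dge H G)"

definition Ln_times :: "nat \<Rightarrow> game set set" where
  "Ln_times n = Ln n - {dclass zero_game}"

text \<open>\<open>L_n^*\<close>: \<open>None\<close> is the new top element \<open>\<triangledown>\<close>, \<open>Some A\<close> the class \<open>A \<in> L_n^\<times>\<close>.\<close>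
definition Ln_star :: "nat \<Rightarrow> game set option set" where
  "Ln_star n = insert None (Some ` Ln_times n)"

fun star_le :: "game set option \<Rightarrow> game set option \<Rightarrow> bool" where
  "star_le _ None = True"
| "star_le None (Some _) = False"
| "star_le (Some A) (Some B) = class_le A B"

definition poset_on :: "'a set \<Rightarrow> ('a \<Rightarrow> 'a \<Rightarrow> bool) \<Rightarrow> bool" where
  "poset_on S le \<longleftrightarrow>
     (\<forall>x\<in>S. le x x) \<and>
     (\<forall>x\<in>S. \<forall>y\<in>S. le x y \<and> le y x \<longrightarrow> x = y) \<and>
     (\<forall>x\<in>S. \<forall>y\<in>S. \<forall>z\<in>S. le x y \<and> le y z \<longrightarrow> le x z)"

definition is_join :: "'a set \<Rightarrow> ('a \<Rightarrow> 'a \<Rightarrow> bool) \<Rightarrow> 'a \<Rightarrow> 'a \<Rightarrow> 'a \<Rightarrow> bool" where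
  "is_join S le x y z \<longleftrightarrow> z \<in> S \<and> le x z \<and> le y z \<and> (\<forall>w\<in>S. le x w \<and> le y w \<longrightarrow> le z w)"

definition is_meet :: "'a set \<Rightarrow> ('a \<Rightarrow> 'a \<Rightarrow> bool) \<Rightarrow> 'a \<Rightarrow> 'a \<Rightarrow> 'a \<Rightarrow> bool" where
  "is_meet S le x y z \<longleftrightarrow> z \<in> S \<and> le z x \<and> le z y \<and> (\<forall>w\<in>S. le w x \<and> le w y \<longrightarrow> le w z)"

definition join_on :: "'a set \<Rightarrow> ('a \<Rightarrow> 'a \<Rightarrow> bool) \<Rightarrow> 'a \<Rightarrow> 'a \<Rightarrow> 'a" where
  "join_on S le x y = (THE z. is_join S le x y z)"

definition meet_on :: "'a set \<Rightarrow> ('a \<Rightarrow> 'a \<Rightarrow> bool) \<Rightarrow> 'a \<Rightarrow> 'a \<Rightarrow> 'a" where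
  "meet_on S le x y = (THE z. is_meet S le x y z)"

definition distributive_lattice_on :: "'a set \<Rightarrow> ('a \<Rightarrow> 'a \<Rightarrow> bool) \<Rightarrow> bool" where
  "distributive_lattice_on S le \<longleftrightarrow>
     poset_on S le \<and>
     (\<forall>x\<in>S. \<forall>y\<in>S. \<exists>z. is_join S le x y z) \<and>
     (\<forall>x\<in>S. \<forall>y\<in>S. \<exists>z. is_meet S le x y z) \<and>
     (\<forall>x\<in>S. \<forall>y\<in>S. \<forall>z\<in>S.
        meet_on S le x (join_on S le y z) = join_on S le (meet_on S le x y) (meet_on S le x z))"

end

theory Submission
  imports Defs
begin

lemma size_lopts: "x |\<in>| lopts G \<Longrightarrow> size x < size G"
  by (cases G) (auto dest: size_lopt)

lemma size_ropts: "x |\<in>| ropts G \<Longrightarrow> size x < size G"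
  by (cases G) (auto dest: size_ropt)

lemma gsum_eq: "gsum G H = Game ((\<lambda>x. gsum x H) |`| lopts G |\<union>| (\<lambda>y. gsum G y) |`| lopts H)
          ((\<lambda>x. gsum x H) |`| ropts G |\<union>| (\<lambda>y. gsum G y) |`| ropts H)"
  by (cases G; cases H) simp

lemma lopts_gsum: "lopts (gsum G H) = (\<lambda>x. gsum x H) |`| lopts G |\<union>| (\<lambda>y. gsum G y) |`| lopts H"
  by (subst gsum_eq) simp

lemma ropts_gsum: "ropts (gsum G H) = (\<lambda>x. gsum x H) |`| ropts G |\<union>| (\<lambda>y. gsum G y) |`| ropts H"
  by (subst gsum_eq) simp

lemma wins_True: "wins G True \<longleftrightarrow> lopts G = {||} \<or> (\<exists>x. x |\<in>| lopts G \<and> \<not> wins x False)"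
  by (cases G) auto

lemma wins_False: "wins G False \<longleftrightarrow> ropts G = {||} \<or> (\<exists>x. x |\<in>| ropts G \<and> \<not> wins x True)"
  by (cases G) auto

definition ge_all :: "game \<Rightarrow> game \<Rightarrow> bool" where
  "ge_all G H \<longleftrightarrow> (\<forall>X. (wins (gsum H X) True \<longrightarrow> wins (gsum G X) True) \<and>
                        (wins (gsum G X) False \<longrightarrow> wins (gsum H X) False))"

lemma outcome_ge_wins: "outcome_ge (outcome A) (outcome B) \<longleftrightarrow>
   (wins B True \<longrightarrow> wins A True) \<and> (wins A False \<longrightarrow> wins B False)"
  unfolding outcome_ge_def outcome_def by (auto split: if_splits)

lemma universe_UNIV: "universe UNIV" by (simp add: universe_def)

lemma dge_iff: "dge G H \<longleftrightarrow> ge_all G H"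
  unfolding dge_def ge_all_def ge_in_def outcome_ge_wins using universe_UNIV by blast

lemma ge_refl: "ge_all G G" unfolding ge_all_def by blast

lemma ge_trans: "ge_all A B \<Longrightarrow> ge_all B C \<Longrightarrow> ge_all A C" unfolding ge_all_def by blast

definition ge_rec :: "game \<Rightarrow> game \<Rightarrow> bool" where
  "ge_rec G H \<longleftrightarrow> (ropts G = {||} \<longrightarrow> ropts H = {||}) \<and>
     (\<forall>g. g |\<in>| ropts G \<longrightarrow> (\<exists>h. h |\<in>| ropts H \<and> ge_all g h))"

lemma lemA:
  assumes lG: "lopts G = {||}" and lH: "lopts H = {||}" and r: "ge_rec G H"
  shows "ge_all G H"
  unfolding ge_all_def
proof
  fix X
  show "(wins (gsum H X) True \<longrightarrow> wins (gsum G X) True) \<and>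
        (wins (gsum G X) False \<longrightarrow> wins (gsum H X) False)"
  proof (induction X rule: measure_induct_rule[where f=size])
    case (less X)
    have IHl: "\<And>x. x |\<in>| lopts X \<Longrightarrow> (wins (gsum G x) False \<longrightarrow> wins (gsum H x) False)"
      using less size_lopts by blast
    have IHr: "\<And>x. x |\<in>| ropts X \<Longrightarrow> (wins (gsum H x) True \<longrightarrow> wins (gsum G x) True)"
      using less size_ropts by blast
    show ?case
    proof (intro conjI impI)
      assume w: "wins (gsum H X) True"
      show "wins (gsum G X) True"
      proof (cases "lopts X = {||}")
        case True then show ?thesis using lG by (simp add: wins_True lopts_gsum)
      next
        case False
        then obtain x where "x |\<in>| lopts X" "\<not> wins (gsum H x) False"
          using w lH by (auto simp: wins_True lopts_gsum)
        then show ?thesis using IHl[of x] by (auto simp: wins_True lopts_gsum)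
      qed
    next
      assume w: "wins (gsum G X) False"
      show "wins (gsum H X) False"
      proof (cases "ropts (gsum G X) = {||}")
        case True
        then have "ropts G = {||}" "ropts X = {||}" by (auto simp: ropts_gsum)
        then show ?thesis using r by (simp add: ge_rec_def wins_False ropts_gsum)
      next
        case False
        then obtain y where y: "y |\<in>| ropts (gsum G X)" "\<not> wins y True"
          using w by (auto simp: wins_False)
        then consider (a) g where "g |\<in>| ropts G" "y = gsum g X"
          | (b) x where "x |\<in>| ropts X" "y = gsum G x"
          by (auto simp: ropts_gsum)
        then show ?thesis
        proof cases
          case a
          then obtain h where "h |\<in>| ropts H" "ge_all g h" using r by (auto simp: ge_rec_def)
          then have "\<not> wins (gsum h X) True" using y a unfolding ge_all_def by blast
          then show ?thesis using \<open>h |\<in>| ropts H\<close> by (auto simp: wins_False ropts_gsum)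
        next
          case b
          then have "\<not> wins (gsum H x) True" using y IHr by blast
          then show ?thesis using b by (auto simp: wins_False ropts_gsum)
        qed
      qed
    qed
  qed
qed

lemma subpos_trans: "x \<in> subpositions g \<Longrightarrow> g \<in> subpositions G \<Longrightarrow> x \<in> subpositions G"
  by (induction rule: subpositions.induct) (auto intro: subpositions.intros)

lemma subpos_cases: "x \<in> subpositions G \<Longrightarrow>
    x = G \<or> (\<exists>g. (g |\<in>| lopts G \<or> g |\<in>| ropts G) \<and> x \<in> subpositions g)"
proof (induction rule: subpositions.induct)
  case self then show ?case by simp
next
  case (lopt H x) then show ?case by (metis subpositions.lopt subpositions.self)
next
  case (ropt H x) then show ?case by (metis subpositions.ropt subpositions.self)
qed

lemma lde_iff: "left_dead_end G \<longleftrightarrow> lopts G = {||} \<and> (\<forall>g. g |\<in>| ropts G \<longrightarrow> left_dead_end g)"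
proof
  assume a: "left_dead_end G"
  show "lopts G = {||} \<and> (\<forall>g. g |\<in>| ropts G \<longrightarrow> left_dead_end g)"
    using a unfolding left_dead_end_def
    by (meson subpos_trans subpositions.ropt subpositions.self)
next
  assume a: "lopts G = {||} \<and> (\<forall>g. g |\<in>| ropts G \<longrightarrow> left_dead_end g)"
  show "left_dead_end G" unfolding left_dead_end_def
  proof
    fix H assume "H \<in> subpositions G"
    then show "lopts H = {||}" using subpos_cases[of H G] a unfolding left_dead_end_def by auto
  qed
qed

lemma lde_lopts: "left_dead_end G \<Longrightarrow> lopts G = {||}" using lde_iff by blast
lemma lde_ropt: "left_dead_end G \<Longrightarrow> g |\<in>| ropts G \<Longrightarrow> left_dead_end g" using lde_iff by blast

lemma lde_zero: "left_dead_end zero_game" by (subst lde_iff) (simp add: zero_game_def)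

lemma lde_eq_zero: "left_dead_end G \<Longrightarrow> ropts G = {||} \<Longrightarrow> G = zero_game"
  unfolding zero_game_def by (metis game.collapse lde_lopts)

lemma lemB:
  "left_dead_end G \<Longrightarrow> left_dead_end H \<Longrightarrow> \<not> ge_rec G H \<Longrightarrow>
     \<exists>X. wins (gsum G X) False \<and> \<not> wins (gsum H X) False"
proof (induction G arbitrary: H rule: measure_induct_rule[where f=size])
  case (less G)
  show ?case
  proof (cases "ropts G = {||}")
    case True
    then have rH: "ropts H \<noteq> {||}" using less.prems(3) by (simp add: ge_rec_def)
    have "wins (gsum G zero_game) False" using True
      by (simp add: wins_False ropts_gsum zero_game_def)
    moreover have "\<not> wins (gsum H zero_game) False"
    proof -
      have "\<And>h. h |\<in>| ropts H \<Longrightarrow> wins (gsum h zero_game) True"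
        using less.prems(2) by (simp add: wins_True lopts_gsum zero_game_def lde_lopts lde_ropt)
      then show ?thesis using rH by (auto simp: wins_False ropts_gsum zero_game_def)
    qed
    ultimately show ?thesis by blast
  next
    case False
    then obtain g' where g': "g' |\<in>| ropts G" "\<And>h'. h' |\<in>| ropts H \<Longrightarrow> \<not> ge_all g' h'"
      using less.prems(3) by (auto simp: ge_rec_def)
    have dg': "left_dead_end g'" using g' less.prems(1) lde_ropt by blast
    define hs where "hs = (if ropts g' = {||} then Game {||} {|zero_game|} else zero_game)"
    have dhs: "left_dead_end hs" unfolding hs_def
      by (simp add: lde_zero) (subst lde_iff, simp add: lde_zero)
    have nhs: "\<not> ge_rec g' hs" unfolding hs_def ge_rec_def zero_game_def by auto
    define S where "S = finsert hs (ropts H)"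
    have "\<forall>s\<in>fset S. \<exists>W. wins (gsum g' W) False \<and> \<not> wins (gsum s W) False"
    proof
      fix s assume s: "s \<in> fset S"
      have ds: "left_dead_end s" using s dhs less.prems(2) lde_ropt unfolding S_def by auto
      have "\<not> ge_rec g' s"
      proof (cases "s = hs")
        case True then show ?thesis using nhs by simp
      next
        case False
        then have "s |\<in>| ropts H" using s S_def by auto
        then show ?thesis using g'(2) lemA dg' ds lde_lopts by blast
      qed
      then show "\<exists>W. wins (gsum g' W) False \<and> \<not> wins (gsum s W) False"
        using less.IH[of g' s] size_ropts[OF g'(1)] dg' ds by blast
    qed
    then obtain W where W: "\<And>s. s |\<in>| S \<Longrightarrow> wins (gsum g' (W s)) False \<and> \<not> wins (gsum s (W s)) False"
      by metis
    define X where "X = Game (W |`| S) {|zero_game|}"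
    have "\<not> wins (gsum g' X) True"
    proof -
      have "lopts (gsum g' X) = gsum g' |`| W |`| S"
        using dg' by (simp add: lopts_gsum X_def lde_lopts fimage_fimage comp_def)
      then show ?thesis using W unfolding S_def by (auto simp: wins_True)
    qed
    then have "wins (gsum G X) False" using g'(1) by (auto simp: wins_False ropts_gsum)
    moreover have "\<not> wins (gsum H X) False"
    proof -
      have 1: "wins (gsum H zero_game) True"
        using less.prems(2) by (simp add: wins_True lopts_gsum zero_game_def lde_lopts)
      have 2: "wins (gsum h X) True" if "h |\<in>| ropts H" for h
      proof -
        have "gsum h (W h) |\<in>| lopts (gsum h X)" using that by (simp add: lopts_gsum X_def S_def)
        moreover have "\<not> wins (gsum h (W h)) False" using W[of h] that S_def by auto
        ultimately show ?thesis by (auto simp: wins_True)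
      qed
      show ?thesis using 1 2 by (auto simp: wins_False ropts_gsum X_def)
    qed
    ultimately show ?thesis by blast
  qed
qed

lemma ge_char: "left_dead_end G \<Longrightarrow> left_dead_end H \<Longrightarrow> ge_all G H \<longleftrightarrow> ge_rec G H"
  using lemA lemB lde_lopts unfolding ge_all_def by blast


lemma height_ropt: "g |\<in>| ropts G \<Longrightarrow> height g < height G"
  by (cases G) (auto simp: less_Suc_eq_le intro!: Max_ge)

lemma height_lopt: "g |\<in>| lopts G \<Longrightarrow> height g < height G"
  by (cases G) (auto simp: less_Suc_eq_le intro!: Max_ge)

lemma height_Game_le:
  assumes "\<forall>x. x |\<in>| A \<longrightarrow> height x < n" "\<forall>x. x |\<in>| B \<longrightarrow> height x < n"
  shows "height (Game A B) \<le> n"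
proof (cases "A = {||} \<and> B = {||}")
  case True then show ?thesis by simp
next
  case False
  have "Max (fset (height |`| A |\<union>| height |`| B)) < n"
    using False assms by (subst Max_less_iff) auto
  then show ?thesis using False by simp
qed

lemma height0: "height x = 0 \<Longrightarrow> x = zero_game"
  by (cases x) (auto simp: zero_game_def split: if_splits)

lemma finite_fsets: "finite T \<Longrightarrow> finite {A. fset A \<subseteq> T}"
proof -
  assume T: "finite T"
  have "fset ` {A. fset A \<subseteq> T} \<subseteq> Pow T" by auto
  then have "finite (fset ` {A. fset A \<subseteq> T})" using T by (meson finite_Pow_iff finite_subset)
  moreover have "inj_on fset {A. fset A \<subseteq> T}" by (simp add: inj_on_def fset_inject)
  ultimately show ?thesis using finite_imageD by blast
qed

lemma fin_height: "finite {x. height x \<le> k}"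
proof (induction k)
  case 0
  have "{x. height x \<le> 0} \<subseteq> {zero_game}" using height0 by auto
  then show ?case using finite_subset by blast
next
  case (Suc k)
  define T where "T = {x. height x \<le> k}"
  have "{x. height x \<le> Suc k} \<subseteq> (\<lambda>(A,B). Game A B) ` ({A. fset A \<subseteq> T} \<times> {A. fset A \<subseteq> T})"
  proof
    fix x assume x: "x \<in> {x. height x \<le> Suc k}"
    have "fset (lopts x) \<subseteq> T" "fset (ropts x) \<subseteq> T"
      using x height_lopt height_ropt unfolding T_def by fastforce+
    then show "x \<in> (\<lambda>(A,B). Game A B) ` ({A. fset A \<subseteq> T} \<times> {A. fset A \<subseteq> T})"
      by (metis (mono_tags, lifting) game.collapse mem_Collect_eq mem_Sigma_iff pair_imageI)
  qed
  moreover have "finite ({A. fset A \<subseteq> T} \<times> {A. fset A \<subseteq> T})"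
    using Suc finite_fsets unfolding T_def by blast
  ultimately show ?case using finite_subset by blast
qed

lemma deq_iff: "deq G H \<longleftrightarrow> ge_all G H \<and> ge_all H G" by (simp add: deq_def dge_iff)

lemma deq_refl: "deq G G" by (simp add: deq_iff ge_refl)

lemma birthday_le: "left_dead_end H \<Longrightarrow> deq H G \<Longrightarrow> birthday G \<le> height H"
  unfolding birthday_def by (rule Least_le) blast

lemma birthday_ex: "left_dead_end G \<Longrightarrow> \<exists>H. left_dead_end H \<and> deq H G \<and> height H = birthday G"
  unfolding birthday_def by (rule LeastI_ex) (use deq_refl in blast)

lemma dclass_eq: "deq H G \<Longrightarrow> dclass H = dclass G"
  unfolding dclass_def deq_iff using ge_trans by blast

lemma LnS_Some:
  assumes "Some A \<in> Ln_star n"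
  shows "\<exists>G0. left_dead_end G0 \<and> height G0 \<le> n \<and> ropts G0 \<noteq> {||} \<and> A = dclass G0"
proof -
  have "A \<in> Ln n" "A \<noteq> dclass zero_game" using assms by (auto simp: Ln_star_def Ln_times_def)
  then obtain G where G: "A = dclass G" "left_dead_end G" "birthday G \<le> n" by (auto simp: Ln_def)
  then obtain H where H: "left_dead_end H" "deq H G" "height H = birthday G" using birthday_ex by blast
  have "A = dclass H" using G H dclass_eq by simp
  moreover have "ropts H \<noteq> {||}" using H \<open>A \<noteq> dclass zero_game\<close> \<open>A = dclass H\<close> lde_eq_zero by blast
  ultimately show ?thesis using H G by auto
qed

definition Pn :: "nat \<Rightarrow> game set" where "Pn n = {x. left_dead_end x \<and> height x < n}"

lemma finite_Pn: "finite (Pn n)"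
proof -
  have "Pn n \<subseteq> {x. height x \<le> n}" by (auto simp: Pn_def)
  then show ?thesis using fin_height finite_subset by blast
qed

definition phi :: "nat \<Rightarrow> game \<Rightarrow> game set" where
  "phi n G = {x \<in> Pn n. \<exists>g. g |\<in>| ropts G \<and> ge_all x g}"

fun FF :: "nat \<Rightarrow> game set option \<Rightarrow> game set" where
  "FF n None = {}"
| "FF n (Some A) = {x \<in> Pn n. \<exists>G\<in>A. \<exists>g. g |\<in>| ropts G \<and> ge_all x g}"

definition upc :: "nat \<Rightarrow> game set \<Rightarrow> bool" where
  "upc n S \<longleftrightarrow> S \<subseteq> Pn n \<and> (\<forall>x\<in>Pn n. \<forall>s\<in>S. ge_all x s \<longrightarrow> x \<in> S)"

definition valid :: "nat \<Rightarrow> game \<Rightarrow> bool" where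
  "valid n G \<longleftrightarrow> left_dead_end G \<and> height G \<le> n \<and> ropts G \<noteq> {||}"

lemma FF_Some: "valid n G0 \<Longrightarrow> FF n (Some (dclass G0)) = phi n G0"
proof
  assume v: "valid n G0"
  show "phi n G0 \<subseteq> FF n (Some (dclass G0))"
    using v deq_refl by (auto simp: phi_def dclass_def valid_def)
  show "FF n (Some (dclass G0)) \<subseteq> phi n G0"
  proof
    fix x assume "x \<in> FF n (Some (dclass G0))"
    then obtain G g where G: "x \<in> Pn n" "left_dead_end G" "deq G G0" "g |\<in>| ropts G" "ge_all x g"
      by (auto simp: dclass_def)
    then have "ge_rec G G0" using ge_char v by (auto simp: valid_def deq_iff)
    then obtain g0 where "g0 |\<in>| ropts G0" "ge_all g g0" using G by (auto simp: ge_rec_def)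
    then show "x \<in> phi n G0" using G ge_trans by (auto simp: phi_def)
  qed
qed

lemma ropts_Pn: "valid n G \<Longrightarrow> g |\<in>| ropts G \<Longrightarrow> g \<in> Pn n"
  unfolding valid_def Pn_def using height_ropt lde_ropt by fastforce

lemma phi_ne: "valid n G \<Longrightarrow> phi n G \<noteq> {}"
  using ropts_Pn ge_refl unfolding phi_def valid_def by fastforce

lemma phi_upc: "upc n (phi n G)"
  unfolding upc_def phi_def using ge_trans by blast

lemma phi_order: "valid n G \<Longrightarrow> valid n H \<Longrightarrow> ge_all H G \<longleftrightarrow> phi n H \<subseteq> phi n G"
proof
  assume v: "valid n G" "valid n H" and ge: "ge_all H G"
  then have "ge_rec H G" using ge_char by (auto simp: valid_def)
  then show "phi n H \<subseteq> phi n G" unfolding phi_def ge_rec_def using ge_trans by blast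
next
  assume v: "valid n G" "valid n H" and sub: "phi n H \<subseteq> phi n G"
  have "ge_rec H G" unfolding ge_rec_def
  proof (intro conjI allI impI)
    show "ropts H = {||} \<Longrightarrow> ropts G = {||}" using v by (simp add: valid_def)
  next
    fix h assume h: "h |\<in>| ropts H"
    then have "h \<in> phi n H" using ropts_Pn[OF v(2) h] ge_refl by (auto simp: phi_def)
    then show "\<exists>g. g |\<in>| ropts G \<and> ge_all h g" using sub by (auto simp: phi_def)
  qed
  then show "ge_all H G" using ge_char v by (auto simp: valid_def)
qed

lemma class_le_iff: "valid n G \<Longrightarrow> valid n H \<Longrightarrow> class_le (dclass G) (dclass H) \<longleftrightarrow> ge_all H G"
  unfolding class_le_def dclass_def dge_iff deq_iff valid_def
  using ge_trans deq_refl ge_refl by blast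

definition mkG :: "game set \<Rightarrow> game" where "mkG S = Game {||} (Abs_fset S)"

lemma mkG:
  assumes "upc n S" "S \<noteq> {}"
  shows "valid n (mkG S)" "Some (dclass (mkG S)) \<in> Ln_star n" "phi n (mkG S) = S"
proof -
  have fin: "finite S" using assms finite_Pn finite_subset unfolding upc_def by blast
  then have fs: "fset (Abs_fset S) = S" by (simp add: Abs_fset_inverse)
  have SP: "S \<subseteq> Pn n" using assms unfolding upc_def by blast
  have de: "left_dead_end (mkG S)" unfolding mkG_def using SP fs
    by (subst lde_iff) (auto simp: Pn_def)
  have ht: "height (mkG S) \<le> n" unfolding mkG_def using SP fs
    by (intro height_Game_le) (auto simp: Pn_def)
  show v: "valid n (mkG S)" using de ht assms fs by (auto simp: valid_def mkG_def)
  have "birthday (mkG S) \<le> n" using birthday_le[OF de deq_refl] ht by simp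
  then have "dclass (mkG S) \<in> Ln n" using de by (auto simp: Ln_def)
  moreover have "dclass (mkG S) \<noteq> dclass zero_game"
  proof
    assume "dclass (mkG S) = dclass zero_game"
    then have "zero_game \<in> dclass (mkG S)" using lde_zero deq_refl by (auto simp: dclass_def)
    then have "ge_all zero_game (mkG S)" by (auto simp: dclass_def deq_iff)
    then have "ge_rec zero_game (mkG S)" using ge_char lde_zero de by blast
    then show False using v by (auto simp: ge_rec_def zero_game_def valid_def)
  qed
  ultimately show "Some (dclass (mkG S)) \<in> Ln_star n" by (auto simp: Ln_star_def Ln_times_def)
  show "phi n (mkG S) = S"
    using assms(1) fs ge_refl unfolding phi_def mkG_def upc_def by auto
qed


lemma gen_dl:
  assumes ord: "\<And>x y. x \<in> S \<Longrightarrow> y \<in> S \<Longrightarrow> le x y \<longleftrightarrow> F y \<subseteq> F x"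
    and inj: "\<And>x y. x \<in> S \<Longrightarrow> y \<in> S \<Longrightarrow> F x = F y \<Longrightarrow> x = y"
    and int: "\<And>x y. x \<in> S \<Longrightarrow> y \<in> S \<Longrightarrow> \<exists>z\<in>S. F z = F x \<inter> F y"
    and un: "\<And>x y. x \<in> S \<Longrightarrow> y \<in> S \<Longrightarrow> \<exists>z\<in>S. F z = F x \<union> F y"
  shows "distributive_lattice_on S le"
proof -
  have isj: "is_join S le x y z" if "x \<in> S" "y \<in> S" "z \<in> S" "F z = F x \<inter> F y" for x y z
    using that ord unfolding is_join_def by auto
  have ism: "is_meet S le x y z" if "x \<in> S" "y \<in> S" "z \<in> S" "F z = F x \<union> F y" for x y z
    using that ord unfolding is_meet_def by auto
  have jo: "join_on S le x y = z" if "x \<in> S" "y \<in> S" "z \<in> S" "F z = F x \<inter> F y" for x y z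
    unfolding join_on_def
  proof (rule the_equality)
    show "is_join S le x y z" using isj that by blast
    fix z' assume J: "is_join S le x y z'"
    have z': "z' \<in> S" "le x z'" "le y z'" using J unfolding is_join_def by auto
    have "le x z" "le y z" using ord that by auto
    then have "le z' z" using J that unfolding is_join_def by blast
    then have "F z' = F z" using z' that ord by auto
    then show "z' = z" using that z' inj by blast
  qed
  have me: "meet_on S le x y = z" if "x \<in> S" "y \<in> S" "z \<in> S" "F z = F x \<union> F y" for x y z
    unfolding meet_on_def
  proof (rule the_equality)
    show "is_meet S le x y z" using ism that by blast
    fix z' assume J: "is_meet S le x y z'"
    have z': "z' \<in> S" "le z' x" "le z' y" using J unfolding is_meet_def by auto
    have "le z x" "le z y" using ord that by auto
    then have "le z z'" using J that unfolding is_meet_def by blast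
    then have "F z' = F z" using z' that ord by auto
    then show "z' = z" using that z' inj by blast
  qed
  have po: "poset_on S le" unfolding poset_on_def using ord inj by blast
  have dist: "meet_on S le x (join_on S le y z) = join_on S le (meet_on S le x y) (meet_on S le x z)"
    if xyz: "x \<in> S" "y \<in> S" "z \<in> S" for x y z
  proof -
    obtain j where j: "j \<in> S" "F j = F y \<inter> F z" using int xyz by blast
    obtain m where m: "m \<in> S" "F m = F x \<union> F j" using un xyz j by blast
    obtain m1 where m1: "m1 \<in> S" "F m1 = F x \<union> F y" using un xyz by blast
    obtain m2 where m2: "m2 \<in> S" "F m2 = F x \<union> F z" using un xyz by blast
    have "F m = F m1 \<inter> F m2" using m m1 m2 j by auto
    then have "join_on S le m1 m2 = m" using jo m m1 m2 by blast
    moreover have "join_on S le y z = j" using jo j xyz by blast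
    moreover have "meet_on S le x j = m" using me j m xyz by blast
    moreover have "meet_on S le x y = m1" "meet_on S le x z = m2" using me m1 m2 xyz by auto
    ultimately show ?thesis by simp
  qed
  have ej: "\<exists>z. is_join S le x y z" if "x \<in> S" "y \<in> S" for x y
    using isj int that by blast
  have em: "\<exists>z. is_meet S le x y z" if "x \<in> S" "y \<in> S" for x y
    using ism un that by blast
  show ?thesis unfolding distributive_lattice_on_def
    using po ej em dist by blast
qed

lemma LnS_cases: "x \<in> Ln_star n \<Longrightarrow> x = None \<or> (\<exists>G. valid n G \<and> x = Some (dclass G))"
  using LnS_Some unfolding valid_def by (cases x) auto

lemma FF_upc: "x \<in> Ln_star n \<Longrightarrow> upc n (FF n x)"
proof -
  assume "x \<in> Ln_star n"
  then consider "x = None" | G where "valid n G" "x = Some (dclass G)" using LnS_cases by blast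
  then show ?thesis
  proof cases
    case 1 then show ?thesis by (simp add: upc_def)
  next
    case 2 then show ?thesis using FF_Some phi_upc by simp
  qed
qed

lemma FF_realize: "upc n S \<Longrightarrow> \<exists>z\<in>Ln_star n. FF n z = S"
proof (cases "S = {}")
  case True then show ?thesis by (intro bexI[of _ None]) (auto simp: Ln_star_def)
next
  case False
  assume "upc n S"
  then show ?thesis using mkG[OF _ False] FF_Some by metis
qed

lemma upc_int: "upc n A \<Longrightarrow> upc n B \<Longrightarrow> upc n (A \<inter> B)"
  unfolding upc_def by blast

lemma upc_un: "upc n A \<Longrightarrow> upc n B \<Longrightarrow> upc n (A \<union> B)"
  unfolding upc_def by blast

theorem mainTheorem9:
  fixes n :: nat
  shows "distributive_lattice_on (Ln_star n) star_le"
proof (rule gen_dl[where F="FF n"])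
  have ord: "star_le x y \<longleftrightarrow> FF n y \<subseteq> FF n x" if xy: "x \<in> Ln_star n" "y \<in> Ln_star n" for x y
  proof -
    consider "x = None" "y = None" | G where "valid n G" "x = Some (dclass G)" "y = None"
      | H where "valid n H" "x = None" "y = Some (dclass H)"
      | G H where "valid n G" "valid n H" "x = Some (dclass G)" "y = Some (dclass H)"
      using LnS_cases[OF xy(1)] LnS_cases[OF xy(2)] by blast
    then show ?thesis
    proof cases
      case 1 then show ?thesis by simp
    next
      case 2 then show ?thesis by simp
    next
      case 3 then show ?thesis using FF_Some phi_ne by simp
    next
      case 4 then show ?thesis using FF_Some phi_order class_le_iff by simp
    qed
  qed
  show "\<And>x y. x \<in> Ln_star n \<Longrightarrow> y \<in> Ln_star n \<Longrightarrow> star_le x y \<longleftrightarrow> FF n y \<subseteq> FF n x"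
    using ord by blast
  show "\<And>x y. x \<in> Ln_star n \<Longrightarrow> y \<in> Ln_star n \<Longrightarrow> FF n x = FF n y \<Longrightarrow> x = y"
  proof -
    fix x y assume xy: "x \<in> Ln_star n" "y \<in> Ln_star n" "FF n x = FF n y"
    then consider "x = None" "y = None" | G where "valid n G" "x = Some (dclass G)" "y = None"
      | H where "valid n H" "x = None" "y = Some (dclass H)"
      | G H where "valid n G" "valid n H" "x = Some (dclass G)" "y = Some (dclass H)"
      using LnS_cases[OF xy(1)] LnS_cases[OF xy(2)] by blast
    then show "x = y"
    proof cases
      case 1 then show ?thesis by simp
    next
      case 2
      then have "phi n G = {}" using xy(3) FF_Some[OF 2(1)] by (simp del: FF.simps(2))
      then show ?thesis using phi_ne[OF 2(1)] by simp
    next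
      case 3
      then have "phi n H = {}" using xy(3) FF_Some[OF 3(1)] by (simp del: FF.simps(2))
      then show ?thesis using phi_ne[OF 3(1)] by simp
    next
      case 4
      then have "ge_all H G" "ge_all G H" using xy FF_Some phi_order by auto
      then have "deq G H" by (simp add: deq_iff)
      then show ?thesis using 4 dclass_eq by simp
    qed
  qed
  show "\<And>x y. x \<in> Ln_star n \<Longrightarrow> y \<in> Ln_star n \<Longrightarrow> \<exists>z\<in>Ln_star n. FF n z = FF n x \<inter> FF n y"
    using FF_upc FF_realize upc_int by blast
  show "\<And>x y. x \<in> Ln_star n \<Longrightarrow> y \<in> Ln_star n \<Longrightarrow> \<exists>z\<in>Ln_star n. FF n z = FF n x \<union> FF n y"
    using FF_upc FF_realize upc_un by blast
qed

end
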